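(* Let $\mathfrak g$ be a semisimple Lie algebra of $r\times r$ matrices, identified with its dual via the trace form, let $N\ge 1$, let $a_1,\dots,a_N$ be pairwise distinct complex numbers and let $\sigma\in\mathfrak g$ be a fixed constant matrix. On $\mathfrak g^N\ni(A_1,\dots,A_N)$ introduce the new coordinates $B_0,\dots,B_{N-1}$ by $$B_l=(-1)^{N-l-1}\sum_{i=1}^N s_{N-l-1}(a_1,\dots,\widehat{a_i},\dots,a_N)\,A_i+(-1)^{N-l}s_{N-l}(a_1,\dots,a_N)\,\sigma,\qquad l=0,\dots,N-1,$$ (so that $\lambda^N\sigma+\sum_{i=0}^{N-1}B_i\lambda^i=\prod_{i=1}^N(\lambda-a_i)\cdot\big(\sigma+\sum_{i=1}^N\frac{A_i}{\lambda-a_i}\big)$), and set $B_N=\sigma$, $B_k=0$ for $k<0$ or $k>N$. For $l=0,\dots,N$ let $\Pi_l$ be the Poisson tensor given in these coordinates by the $N\times N$ block-diagonal operator matrix $\Pi_l=\begin{pmatrix}C_l&0\\0&D_l\end{pmatrix}$ with $(C_l)_{ij}=-[B_{i+j-l-1},\cdot\,]$ for $i,j=1,\dots,l$ and $(D_l)_{ij}=[B_{i+j+l-1},\cdot\,]$ for $i,j=1,\dots,N-l$, where rows and columns are indexed in order by $B_0,\dots,B_{N-1}$. Then the diagonal Lie–Poisson tensor $P$ on $\mathfrak g^N$ is, in the coordinates $B_0,\dots,B_{N-1}$, given by $$P=\sum_{l=0}^N(-1)^{N-l-1}s_{N-l}(a_1,\dots,a_N)\,\Pi_l .$$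
   Context: $s_k(x_1,\dots,x_m)$ denotes the $k$-th elementary symmetric polynomial ($s_0=1$, $s_k=0$ for $k<0$ or $k>m$), and a hat denotes omission. For a smooth function $F$ on $\mathfrak g^N$, $\partial F/\partial A_i\in\mathfrak g$ is defined by $F(\dots,A_i+t\Xi,\dots)=F+t\,\mathrm{Tr}(\frac{\partial F}{\partial A_i}\Xi)+o(t)$ for all $\Xi\in\mathfrak g$ (similarly for $\partial F/\partial B_j$). A tensor $T$ represented by an operator matrix $(T_{ij})$ acts by $(T\,dF)_i=\sum_j T_{ij}(\partial F/\partial X_j)$ and defines the bracket $\{F,G\}_T=\sum_i\mathrm{Tr}\big(\frac{\partial F}{\partial X_i}(T\,dG)_i\big)$, where $X_j$ are the coordinates in use. The diagonal Lie–Poisson tensor $P$ is given in the coordinates $A_1,\dots,A_N$ by $(P\,dF)_i=[A_i,\partial F/\partial A_i]$, $i=1,\dots,N$ (diagonal operator matrix with entries $[A_i,\cdot\,]$). *)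

theory Defs
  imports "HOL-Analysis.Analysis"
begin

type_synonym 'r cmat = "complex^'r^'r"

definition msc :: "complex \<Rightarrow> 'r::finite cmat \<Rightarrow> 'r cmat" where
  "msc c M = (\<chi> i j. c * M$i$j)"

definition lbr :: "'r::finite cmat \<Rightarrow> 'r cmat \<Rightarrow> 'r cmat" where
  "lbr X Y = X ** Y - Y ** X"

definition csubspace :: "'r::finite cmat set \<Rightarrow> bool" where
  "csubspace S \<longleftrightarrow> 0 \<in> S \<and> (\<forall>x\<in>S. \<forall>y\<in>S. x + y \<in> S) \<and> (\<forall>c. \<forall>x\<in>S. msc c x \<in> S)"

definition lie_subalgebra :: "'r::finite cmat set \<Rightarrow> bool" where
  "lie_subalgebra g \<longleftrightarrow> csubspace g \<and> (\<forall>x\<in>g. \<forall>y\<in>g. lbr x y \<in> g)"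

definition lie_ideal :: "'r::finite cmat set \<Rightarrow> 'r cmat set \<Rightarrow> bool" where
  "lie_ideal I g \<longleftrightarrow> csubspace I \<and> I \<subseteq> g \<and> (\<forall>x\<in>g. \<forall>y\<in>I. lbr x y \<in> I)"

inductive_set derived :: "'r::finite cmat set \<Rightarrow> 'r cmat set" for I where
  zero: "0 \<in> derived I"
| br: "x \<in> I \<Longrightarrow> y \<in> I \<Longrightarrow> lbr x y \<in> derived I"
| add: "u \<in> derived I \<Longrightarrow> v \<in> derived I \<Longrightarrow> u + v \<in> derived I"
| smul: "u \<in> derived I \<Longrightarrow> msc c u \<in> derived I"

definition solvable :: "'r::finite cmat set \<Rightarrow> bool" where
  "solvable I \<longleftrightarrow> (\<exists>k. (derived ^^ k) I \<subseteq> {0})"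

definition semisimple :: "'r::finite cmat set \<Rightarrow> bool" where
  "semisimple g \<longleftrightarrow> lie_subalgebra g \<and> (\<forall>I. lie_ideal I g \<and> solvable I \<longrightarrow> I = {0})"

definition esym :: "nat \<Rightarrow> nat set \<Rightarrow> (nat \<Rightarrow> complex) \<Rightarrow> complex" where
  "esym k S a = (\<Sum>T\<in>{T. T \<subseteq> S \<and> card T = k}. \<Prod>i\<in>T. a i)"

definition Bcoord :: "nat \<Rightarrow> (nat \<Rightarrow> complex) \<Rightarrow> 'r::finite cmat \<Rightarrow> (nat \<Rightarrow> 'r cmat) \<Rightarrow> int \<Rightarrow> 'r cmat" where
  "Bcoord N a \<sigma> A k =
     (if k < 0 \<or> k > int N then 0
      else if k = int N then \<sigma>
      else (let l = nat k in
        (\<Sum>i=1..N. msc ((-1)^(N-l-1) * esym (N-l-1) ({1..N} - {i}) a) (A i))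
        + msc ((-1)^(N-l) * esym (N-l) {1..N} a) \<sigma>))"

definition has_grad :: "'r::finite cmat set \<Rightarrow> nat \<Rightarrow> nat \<Rightarrow> ((nat \<Rightarrow> 'r cmat) \<Rightarrow> complex)
    \<Rightarrow> (nat \<Rightarrow> 'r cmat) \<Rightarrow> (nat \<Rightarrow> 'r cmat) \<Rightarrow> bool" where
  "has_grad g off n F X Y \<longleftrightarrow>
     (\<forall>i\<in>{off..<off+n}. Y i \<in> g) \<and>
     (\<forall>V. (\<forall>i\<in>{off..<off+n}. V i \<in> g) \<and> (\<forall>i. i \<notin> {off..<off+n} \<longrightarrow> V i = 0) \<longrightarrow>
        ((\<lambda>t. F (\<lambda>i. X i + msc t (V i))) has_field_derivative
            (\<Sum>i\<in>{off..<off+n}. trace (Y i ** V i))) (at 0))"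

definition P_bracket :: "nat \<Rightarrow> (nat \<Rightarrow> 'r::finite cmat) \<Rightarrow> (nat \<Rightarrow> 'r cmat) \<Rightarrow> (nat \<Rightarrow> 'r cmat) \<Rightarrow> complex" where
  "P_bracket N A dF dG = (\<Sum>i=1..N. trace (dF i ** lbr (A i) (dG i)))"

text \<open>Bracket of Pi_l in coordinates B_0..B_(N-1) (row/column p+1 corresponds to B_p),
  evaluated on B-gradients dF, dG (indexed 0..N-1); B is the extended coordinate family.\<close>
definition Pi_bracket :: "nat \<Rightarrow> nat \<Rightarrow> (int \<Rightarrow> 'r::finite cmat) \<Rightarrow> (nat \<Rightarrow> 'r cmat) \<Rightarrow> (nat \<Rightarrow> 'r cmat) \<Rightarrow> complex" where
  "Pi_bracket N l B dF dG =
     (\<Sum>i=1..l. \<Sum>j=1..l. trace (dF (i-1) ** (- lbr (B (int i + int j - int l - 1)) (dG (j-1)))))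
   + (\<Sum>i=1..N-l. \<Sum>j=1..N-l. trace (dF (l+i-1) ** lbr (B (int i + int j + int l - 1)) (dG (l+j-1))))"

end

theory Submission
  imports Defs
begin

lemma mm_add_r: "((A + B) ** C) = (A ** C) + (B ** (C::'r::finite cmat))"
  by (simp add: matrix_matrix_mult_def vec_eq_iff sum.distrib algebra_simps)
lemma mm_sub_l: "(A ** (B - C)) = (A ** B) - (A ** (C::'r::finite cmat))"
  by (simp add: matrix_matrix_mult_def vec_eq_iff sum_subtractf algebra_simps)
lemma mm_sub_r: "((A - B) ** C) = (A ** C) - (B ** (C::'r::finite cmat))"
  by (simp add: matrix_matrix_mult_def vec_eq_iff sum_subtractf algebra_simps)
lemma trace_zero: "trace (0::'r::finite cmat) = 0" by (simp add: trace_def)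

lemma trace_msc_right: "trace (X ** msc c Y) = c * trace (X ** (Y::'r::finite cmat))"
  by (simp add: trace_def matrix_matrix_mult_def msc_def sum_distrib_left algebra_simps)
lemma trace_msc_left: "trace (msc c X ** Y) = c * trace (X ** (Y::'r::finite cmat))"
  by (simp add: trace_def matrix_matrix_mult_def msc_def sum_distrib_left algebra_simps)
lemma trace_add_right: "trace (X ** (Y + Z)) = trace (X ** Y) + trace (X ** (Z::'r::finite cmat))"
  by (simp add: matrix_add_ldistrib trace_add)
lemma trace_add_left: "trace ((X + Y) ** Z) = trace (X ** Z) + trace (Y ** (Z::'r::finite cmat))"
  by (simp add: mm_add_r trace_add)
lemma trace_zero_right: "trace (X ** (0::'r::finite cmat)) = 0"
  by (simp add: trace_def matrix_matrix_mult_def)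
lemma trace_zero_left: "trace ((0::'r::finite cmat) ** X) = 0"
  by (simp add: trace_def matrix_matrix_mult_def)
lemma trace_neg_right: "trace (X ** (- Y)) = - trace (X ** (Y::'r::finite cmat))"
  by (simp add: trace_def matrix_matrix_mult_def sum_negf)
lemma trace_sum_right: "finite S \<Longrightarrow> trace (X ** (\<Sum>j\<in>S. f j)) = (\<Sum>j\<in>S. trace (X ** (f j::'r::finite cmat)))"
  by (induction S rule: finite_induct) (auto simp: trace_zero trace_zero_right trace_add_right)
lemma trace_sum_left: "finite S \<Longrightarrow> trace ((\<Sum>j\<in>S. f j) ** X) = (\<Sum>j\<in>S. trace ((f j::'r::finite cmat) ** X))"
  by (induction S rule: finite_induct) (auto simp: trace_zero trace_zero_left trace_add_left)
lemma trace_lbr_move: "trace (X ** lbr Y Z) = trace (lbr X Y ** (Z::'r::finite cmat))"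
proof -
  have "trace (X ** lbr Y Z) = trace (X ** Y ** Z) - trace (X ** (Z ** Y))"
    by (simp add: lbr_def mm_sub_l trace_sub matrix_mul_assoc)
  also have "trace (X ** (Z ** Y)) = trace (Y ** X ** Z)"
    by (metis matrix_mul_assoc trace_mul_sym)
  finally show ?thesis by (simp add: lbr_def mm_sub_r trace_sub)
qed

definition T :: "'r::finite cmat \<Rightarrow> 'r cmat \<Rightarrow> 'r cmat \<Rightarrow> complex" where
  "T u X v = trace (u ** lbr X v)"

lemma lbr_add1: "lbr (X + Y) Z = lbr X Z + lbr Y (Z::'r::finite cmat)"
  by (simp add: lbr_def mm_add_r matrix_add_ldistrib)
lemma lbr_add2: "lbr Z (X + Y) = lbr Z X + lbr Z (Y::'r::finite cmat)"
  by (simp add: lbr_def mm_add_r matrix_add_ldistrib)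
lemma msc_mult_left: "msc c X ** Y = msc c (X ** (Y::'r::finite cmat))"
  by (simp add: msc_def matrix_matrix_mult_def sum_distrib_left algebra_simps vec_eq_iff)
lemma msc_mult_right: "X ** msc c Y = msc c (X ** (Y::'r::finite cmat))"
  by (simp add: msc_def matrix_matrix_mult_def sum_distrib_left algebra_simps vec_eq_iff)
lemma msc_diff: "msc c X - msc c Y = msc c (X - (Y::'r::finite cmat))"
  by (simp add: msc_def vec_eq_iff algebra_simps)
lemma lbr_msc1: "lbr (msc c X) Y = msc c (lbr X (Y::'r::finite cmat))"
  by (simp add: lbr_def msc_mult_left msc_mult_right msc_diff)
lemma lbr_msc2: "lbr Y (msc c X) = msc c (lbr Y (X::'r::finite cmat))"
  by (simp add: lbr_def msc_mult_left msc_mult_right msc_diff)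

lemma T_add1: "T (u + u') X v = T u X v + T u' X v" by (simp add: T_def trace_add_left)
lemma T_add2: "T u (X + X') v = T u X v + T u X' v" by (simp add: T_def lbr_add1 trace_add_right)
lemma T_add3: "T u X (v + v') = T u X v + T u X v'" by (simp add: T_def lbr_add2 trace_add_right)
lemma T_msc1: "T (msc c u) X v = c * T u X v" by (simp add: T_def trace_msc_left)
lemma T_msc2: "T u (msc c X) v = c * T u X v" by (simp add: T_def lbr_msc1 trace_msc_right)
lemma T_msc3: "T u X (msc c v) = c * T u X v" by (simp add: T_def lbr_msc2 trace_msc_right)
lemma T_zero1: "T 0 X v = 0" by (simp add: T_def trace_zero_left trace_zero)
lemma T_zero2: "T u 0 v = 0" by (simp add: T_def lbr_def trace_zero_right trace_zero)
lemma T_zero3: "T u X 0 = 0" by (simp add: T_def lbr_def trace_zero_right trace_zero)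
lemma T_sum1: "finite S \<Longrightarrow> T (\<Sum>j\<in>S. f j) X v = (\<Sum>j\<in>S. T (f j) X v)"
  by (induction S rule: finite_induct) (auto simp: T_zero1 T_add1)
lemma T_sum2: "finite S \<Longrightarrow> T u (\<Sum>j\<in>S. f j) v = (\<Sum>j\<in>S. T u (f j) v)"
  by (induction S rule: finite_induct) (auto simp: T_zero2 T_add2)
lemma T_sum3: "finite S \<Longrightarrow> T u X (\<Sum>j\<in>S. f j) = (\<Sum>j\<in>S. T u X (f j))"
  by (induction S rule: finite_induct) (auto simp: T_zero3 T_add3)

lemma esym_0: "finite S \<Longrightarrow> esym 0 S a = 1"
proof -
  assume f: "finite S"
  have "{T. T \<subseteq> S \<and> card T = 0} = {{}}"
  proof (intro equalityI subsetI)
    fix T assume "T \<in> {T. T \<subseteq> S \<and> card T = 0}"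
    then have "T \<subseteq> S" "card T = 0" by auto
    moreover have "finite T" using f \<open>T \<subseteq> S\<close> finite_subset by blast
    ultimately show "T \<in> {{}}" by simp
  qed auto
  then show ?thesis by (simp add: esym_def)
qed

lemma esym_big: "finite S \<Longrightarrow> card S < k \<Longrightarrow> esym k S a = 0"
proof -
  assume f: "finite S" and c: "card S < k"
  have e: "{T. T \<subseteq> S \<and> card T = k} = {}"
      proof (rule ccontr)
    assume "{T. T \<subseteq> S \<and> card T = k} \<noteq> {}"
    then obtain T where "T \<subseteq> S" "card T = k" by blast
    then show False using card_mono[OF f, of T] c by simp
  qed
  show ?thesis unfolding esym_def e by simp
qed

lemma esym_rec:
  assumes f: "finite S" and x: "x \<in> S"
  shows "esym (Suc j) S a = esym (Suc j) (S - {x}) a + a x * esym j (S - {x}) a"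
proof -
  let ?S = "S - {x}"
  have split: "{T. T \<subseteq> S \<and> card T = Suc j} =
     {T. T \<subseteq> ?S \<and> card T = Suc j} \<union> insert x ` {T. T \<subseteq> ?S \<and> card T = j}"
  proof (intro equalityI subsetI)
    fix T assume "T \<in> {T. T \<subseteq> S \<and> card T = Suc j}"
    then have T: "T \<subseteq> S" "card T = Suc j" by auto
    have fT: "finite T" using T f finite_subset by blast
    show "T \<in> {T. T \<subseteq> ?S \<and> card T = Suc j} \<union> insert x ` {T. T \<subseteq> ?S \<and> card T = j}"
    proof (cases "x \<in> T")
      case True
      then have "T = insert x (T - {x})" by auto
      moreover have "card (T - {x}) = j" using True T fT by simp
      moreover have "T - {x} \<subseteq> ?S" using T by auto
      ultimately show ?thesis by blast
    next
      case False then show ?thesis using T by auto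
    qed
  next
    fix T assume "T \<in> {T. T \<subseteq> ?S \<and> card T = Suc j} \<union> insert x ` {T. T \<subseteq> ?S \<and> card T = j}"
    then show "T \<in> {T. T \<subseteq> S \<and> card T = Suc j}"
    proof
      assume "T \<in> {T. T \<subseteq> ?S \<and> card T = Suc j}" then show ?thesis by auto
    next
      assume "T \<in> insert x ` {T. T \<subseteq> ?S \<and> card T = j}"
      then obtain U where U: "U \<subseteq> ?S" "card U = j" "T = insert x U" by auto
      have "finite U" using U f finite_subset by blast
      moreover have "x \<notin> U" using U by auto
      ultimately show ?thesis using U x by auto
    qed
  qed
  have fin1: "finite {T. T \<subseteq> ?S \<and> card T = Suc j}"
    by (rule finite_subset[of _ "Pow ?S"]) (use f in auto)
  have fin2: "finite (insert x ` {T. T \<subseteq> ?S \<and> card T = j})"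
    by (rule finite_imageI, rule finite_subset[of _ "Pow ?S"]) (use f in auto)
  have disj: "{T. T \<subseteq> ?S \<and> card T = Suc j} \<inter> insert x ` {T. T \<subseteq> ?S \<and> card T = j} = {}" by auto
  have inj: "inj_on (insert x) {T. T \<subseteq> ?S \<and> card T = j}"
    by (rule inj_onI) (metis Diff_insert_absorb insertCI mem_Collect_eq subsetD Diff_iff)
  have "esym (Suc j) S a = esym (Suc j) ?S a + (\<Sum>T\<in>insert x ` {T. T \<subseteq> ?S \<and> card T = j}. \<Prod>i\<in>T. a i)"
    unfolding esym_def split by (rule sum.union_disjoint[OF fin1 fin2 disj])
  also have "(\<Sum>T\<in>insert x ` {T. T \<subseteq> ?S \<and> card T = j}. \<Prod>i\<in>T. a i)
     = (\<Sum>T\<in>{T. T \<subseteq> ?S \<and> card T = j}. \<Prod>i\<in>insert x T. a i)"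
    by (simp add: sum.reindex[OF inj])
  also have "\<dots> = (\<Sum>T\<in>{T. T \<subseteq> ?S \<and> card T = j}. a x * (\<Prod>i\<in>T. a i))"
  proof (rule sum.cong[OF refl])
    fix T assume "T \<in> {T. T \<subseteq> ?S \<and> card T = j}"
    then have "finite T" "x \<notin> T" using f finite_subset by auto
    then show "(\<Prod>i\<in>insert x T. a i) = a x * (\<Prod>i\<in>T. a i)" by simp
  qed
  also have "\<dots> = a x * esym j ?S a" by (simp add: esym_def sum_distrib_left)
  finally show ?thesis .
qed

definition mm :: "nat \<Rightarrow> (nat \<Rightarrow> complex) \<Rightarrow> nat \<Rightarrow> int \<Rightarrow> complex" where
  "mm N a i k = (if 0 \<le> k \<and> k < int N then (-1)^(N - nat k - 1) * esym (N - nat k - 1) ({1..N} - {i}) a else 0)"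

definition qq :: "nat \<Rightarrow> (nat \<Rightarrow> complex) \<Rightarrow> int \<Rightarrow> complex" where
  "qq N a k = (if 0 \<le> k \<and> k \<le> int N then (-1)^(N - nat k) * esym (N - nat k) {1..N} a else 0)"

lemma qq_rec:
  assumes N: "N \<ge> 1" and i: "i \<in> {1..N}"
  shows "qq N a k = mm N a i (k - 1) - a i * mm N a i k"
proof -
  let ?S = "{1..N}" and ?S' = "{1..N} - {i}"
  have cS': "card ?S' = N - 1" using i by simp
  consider "k < 0" | "k = 0" | "0 < k \<and> k < int N" | "k = int N" | "k > int N" by linarith
  then show ?thesis
  proof cases
    case 1 then show ?thesis by (simp add: qq_def mm_def)
  next
    case 2
    obtain j where j: "N = Suc j" using N by (cases N) auto
    have "esym (Suc j) ?S a = a i * esym j ?S' a"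
      using esym_rec[of ?S i j a] esym_big[of ?S' "Suc j" a] i cS' j by simp
    then show ?thesis using 2 j by (simp add: qq_def mm_def)
  next
    case 3
    define kn where "kn = nat k"
    have kk: "k = int kn" "0 < kn" "kn < N" using 3 kn_def by auto
    obtain j where j: "N - kn = Suc j" using kk by (metis Suc_diff_Suc)
    have e: "esym (Suc j) ?S a = esym (Suc j) ?S' a + a i * esym j ?S' a"
      using esym_rec[of ?S i j a] i by simp
    have n1: "nat (k - 1) = kn - 1" using kk by simp
    have n2: "N - (kn - 1) - 1 = Suc j" using kk j by simp
    have n3: "N - kn - 1 = j" using j by simp
    show ?thesis using kk e j n1 n2 n3 by (simp add: qq_def mm_def algebra_simps)
  next
    case 4
    have "nat (k - 1) = N - 1" using 4 by simp
    then show ?thesis using 4 N by (simp add: qq_def mm_def esym_0)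
  next
    case 5 then show ?thesis by (simp add: qq_def mm_def)
  qed
qed

lemma Bcoord_repr:
  assumes N: "N \<ge> 1"
  shows "Bcoord N a \<sigma> X k = (\<Sum>j=1..N. msc (mm N a j k) (X j)) + msc (qq N a k) \<sigma>"
proof -
  have msc0: "\<And>Y::'a::finite cmat. msc 0 Y = 0" by (simp add: msc_def vec_eq_iff)
  have msc1: "\<And>Y::'a::finite cmat. msc 1 Y = Y" by (simp add: msc_def vec_eq_iff)
  consider "k < 0 \<or> k > int N" | "k = int N" | "0 \<le> k \<and> k < int N" by linarith
  then show ?thesis
  proof cases
    case 1 then show ?thesis by (auto simp: Bcoord_def mm_def qq_def msc0)
  next
    case 2 then show ?thesis by (simp add: Bcoord_def mm_def qq_def msc0 msc1 esym_0)
  next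
    case 3 then show ?thesis by (simp add: Bcoord_def mm_def qq_def Let_def)
  qed
qed

lemma tele: "(\<Sum>l\<in>{s..s+int d}. f l - f (l+1)) = f s - (f (s + int d + 1) :: complex)"
proof (induction d)
  case 0 then show ?case by simp
next
  case (Suc d)
  have e: "{s..s+int (Suc d)} = insert (s + int d + 1) {s..s+int d}" by auto
  show ?case unfolding e using Suc by (simp add: algebra_simps)
qed

lemma reflect_sum:
  fixes p r :: int
  assumes "0 \<le> p" "p \<le> r"
  shows "(\<Sum>l\<in>{0..p}. h l (p+r+1-l)) = (\<Sum>l\<in>{r+1..p+r+1}. h (p+r+1-l) l)"
  by (rule sum.reindex_bij_witness[of _ "\<lambda>l. p+r+1-l" "\<lambda>l. p+r+1-l"]) auto

lemma main_scalar:
  fixes m q :: "int \<Rightarrow> complex" and p r :: int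
  assumes m0: "\<And>k. k < 0 \<Longrightarrow> m k = 0" and qrec: "\<And>l. q l = m (l-1) - c * m l"
    and pr: "0 \<le> p" "p \<le> r"
  shows "(\<Sum>l\<in>{r+1..p+r+1}. q l * m (p+r+1-l)) - (\<Sum>l\<in>{0..p}. q l * m (p+r+1-l)) = m p * m r"
proof -
  let ?n = "p+r+1"
  define F where "F l = m (l-1) * m (?n - l)" for l
  have "(\<Sum>l\<in>{0..p}. q l * m (?n-l)) = (\<Sum>l\<in>{r+1..?n}. q (?n-l) * m l)"
    using reflect_sum[OF pr, of "\<lambda>x y. q x * m y"] by simp
  then have "(\<Sum>l\<in>{r+1..?n}. q l * m (?n-l)) - (\<Sum>l\<in>{0..p}. q l * m (?n-l))
      = (\<Sum>l\<in>{r+1..?n}. q l * m (?n-l) - q (?n-l) * m l)"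
    by (simp add: sum_subtractf)
  also have "\<dots> = (\<Sum>l\<in>{r+1..(r+1) + int (nat p)}. F l - F (l+1))"
    using pr by (intro sum.cong) (auto simp: F_def qrec algebra_simps)
  also have "\<dots> = F (r+1) - F (r + 1 + int (nat p) + 1)" by (rule tele)
  also have "\<dots> = m p * m r" using pr m0[of "-1"] by (simp add: F_def)
  finally show ?thesis .
qed

lemma sigma_scalar:
  fixes q :: "int \<Rightarrow> complex" and p r :: int
  assumes pr: "0 \<le> p" "p \<le> r"
  shows "(\<Sum>l\<in>{r+1..p+r+1}. q l * q (p+r+1-l)) - (\<Sum>l\<in>{0..p}. q l * q (p+r+1-l)) = 0"
  using reflect_sum[OF pr, of "\<lambda>x y. q x * q y"] by (simp add: mult.commute)

lemma extend_sum:
  fixes q F :: "int \<Rightarrow> complex" and n r :: int and N :: nat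
  assumes F0: "\<And>k. k < 0 \<Longrightarrow> F k = 0" and q0: "\<And>l. l > int N \<Longrightarrow> q l = 0"
    and "0 \<le> n"
  shows "(\<Sum>l\<in>{r+1..int N}. q l * F (n-l)) = (\<Sum>l\<in>{r+1..n}. q l * F (n-l))"
proof -
  have "(\<Sum>l\<in>{r+1..int N}. q l * F (n-l)) = (\<Sum>l\<in>{r+1..int N + n}. q l * F (n-l))"
    by (rule sum.mono_neutral_left) (use assms in auto)
  also have "\<dots> = (\<Sum>l\<in>{r+1..n}. q l * F (n-l))"
    by (rule sum.mono_neutral_right) (use assms in auto)
  finally show ?thesis .
qed

definition eps :: "nat \<Rightarrow> nat \<Rightarrow> nat \<Rightarrow> complex" where
  "eps l p r = (if p < l \<and> r < l then -1 else if l \<le> p \<and> l \<le> r then 1 else 0)"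

lemma eps_split:
  fixes X :: "int \<Rightarrow> complex" and q :: "int \<Rightarrow> complex"
  assumes "p \<le> r" "r < N"
  shows "(\<Sum>l=0..N. (- q (int l)) * eps l p r * X (int l))
     = (\<Sum>l\<in>{int r+1..int N}. q l * X l) - (\<Sum>l\<in>{0..int p}. q l * X l)"
proof -
  have "(\<Sum>l=0..N. (- q (int l)) * eps l p r * X (int l))
     = (\<Sum>l=0..N. (if r < l then q (int l) * X (int l) else 0) - (if l \<le> p then q (int l) * X (int l) else 0))"
    using assms by (intro sum.cong) (auto simp: eps_def)
  also have "\<dots> = (\<Sum>l\<in>{r<..N}. q (int l) * X (int l)) - (\<Sum>l\<in>{0..p}. q (int l) * X (int l))"
  proof -
    have a: "(\<Sum>l=0..N. (if r < l then q (int l) * X (int l) else 0)) = (\<Sum>l\<in>{r<..N}. q (int l) * X (int l))"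
      by (rule sum.mono_neutral_cong_right) auto
    have b: "(\<Sum>l=0..N. (if l \<le> p then q (int l) * X (int l) else 0)) = (\<Sum>l\<in>{0..p}. q (int l) * X (int l))"
      using assms by (intro sum.mono_neutral_cong_right) auto
    show ?thesis by (simp add: sum_subtractf a b)
  qed
  also have "(\<Sum>l\<in>{r<..N}. q (int l) * X (int l)) = (\<Sum>l\<in>{int r+1..int N}. q l * X l)"
    by (rule sum.reindex_bij_witness[of _ nat int]) auto
  also have "(\<Sum>l\<in>{0..p}. q (int l) * X (int l)) = (\<Sum>l\<in>{0..int p}. q l * X l)"
    by (rule sum.reindex_bij_witness[of _ nat int]) auto
  finally show ?thesis .
qed

lemma scalar_A:
  assumes N: "N \<ge> 1" and j: "j \<in> {1..N}" and p: "p < N" and r: "r < N"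
  shows "(\<Sum>l=0..N. (- qq N a (int l)) * eps l p r * mm N a j (int p + int r + 1 - int l))
         = mm N a j (int p) * mm N a j (int r)"
proof -
  have gen: "(\<Sum>l=0..N. (- qq N a (int l)) * eps l p r * mm N a j (int p + int r + 1 - int l))
         = mm N a j (int p) * mm N a j (int r)" if pr: "p \<le> r" "p < N" "r < N" for p r
  proof -
    have m0: "\<And>k. k < 0 \<Longrightarrow> mm N a j k = 0" by (simp add: mm_def)
    have q0: "\<And>l. l > int N \<Longrightarrow> qq N a l = 0" by (simp add: qq_def)
    have "(\<Sum>l=0..N. (- qq N a (int l)) * eps l p r * mm N a j (int p + int r + 1 - int l))
      = (\<Sum>l\<in>{int r+1..int N}. qq N a l * mm N a j (int p + int r + 1 - l))
        - (\<Sum>l\<in>{0..int p}. qq N a l * mm N a j (int p + int r + 1 - l))"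
      using eps_split[of p r N "qq N a" "\<lambda>l. mm N a j (int p + int r + 1 - l)"] pr by simp
    also have "(\<Sum>l\<in>{int r+1..int N}. qq N a l * mm N a j (int p + int r + 1 - l))
       = (\<Sum>l\<in>{int r+1..int p + int r + 1}. qq N a l * mm N a j (int p + int r + 1 - l))"
      by (rule extend_sum[where F="mm N a j"]) (use m0 q0 in auto)
    also have "(\<Sum>l\<in>{int r+1..int p + int r + 1}. qq N a l * mm N a j (int p + int r + 1 - l))
        - (\<Sum>l\<in>{0..int p}. qq N a l * mm N a j (int p + int r + 1 - l)) = mm N a j (int p) * mm N a j (int r)"
      by (rule main_scalar[where c="a j"]) (use m0 qq_rec[OF N j] pr in auto)
    finally show ?thesis .
  qed
  show ?thesis
  proof (cases "p \<le> r")
    case True then show ?thesis using gen p r by blast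
  next
    case False
    have e: "eps l p r = eps l r p" for l by (auto simp: eps_def)
    have "(\<Sum>l=0..N. (- qq N a (int l)) * eps l p r * mm N a j (int p + int r + 1 - int l))
        = (\<Sum>l=0..N. (- qq N a (int l)) * eps l r p * mm N a j (int r + int p + 1 - int l))"
      by (intro sum.cong refl) (simp add: e add.commute)
    then show ?thesis using gen[of r p] False p r by (simp add: mult.commute)
  qed
qed

lemma scalar_S:
  assumes N: "N \<ge> 1" and p: "p < N" and r: "r < N"
  shows "(\<Sum>l=0..N. (- qq N a (int l)) * eps l p r * qq N a (int p + int r + 1 - int l)) = 0"
proof -
  have gen: "(\<Sum>l=0..N. (- qq N a (int l)) * eps l p r * qq N a (int p + int r + 1 - int l)) = 0"
    if pr: "p \<le> r" "p < N" "r < N" for p r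
  proof -
    have q0: "\<And>l. l > int N \<Longrightarrow> qq N a l = 0" by (simp add: qq_def)
    have m0: "\<And>k. k < 0 \<Longrightarrow> qq N a k = 0" by (simp add: qq_def)
    have "(\<Sum>l=0..N. (- qq N a (int l)) * eps l p r * qq N a (int p + int r + 1 - int l))
      = (\<Sum>l\<in>{int r+1..int N}. qq N a l * qq N a (int p + int r + 1 - l))
        - (\<Sum>l\<in>{0..int p}. qq N a l * qq N a (int p + int r + 1 - l))"
      using eps_split[of p r N "qq N a" "\<lambda>l. qq N a (int p + int r + 1 - l)"] pr by simp
    also have "(\<Sum>l\<in>{int r+1..int N}. qq N a l * qq N a (int p + int r + 1 - l))
       = (\<Sum>l\<in>{int r+1..int p + int r + 1}. qq N a l * qq N a (int p + int r + 1 - l))"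
      by (rule extend_sum[where F="qq N a"]) (use m0 q0 in auto)
    also have "(\<Sum>l\<in>{int r+1..int p + int r + 1}. qq N a l * qq N a (int p + int r + 1 - l))
        - (\<Sum>l\<in>{0..int p}. qq N a l * qq N a (int p + int r + 1 - l)) = 0"
      by (rule sigma_scalar) (use pr in auto)
    finally show ?thesis .
  qed
  show ?thesis
  proof (cases "p \<le> r")
    case True then show ?thesis using gen p r by blast
  next
    case False
    have e: "eps l p r = eps l r p" for l by (auto simp: eps_def)
    have "(\<Sum>l=0..N. (- qq N a (int l)) * eps l p r * qq N a (int p + int r + 1 - int l))
        = (\<Sum>l=0..N. (- qq N a (int l)) * eps l r p * qq N a (int r + int p + 1 - int l))"
      by (intro sum.cong refl) (simp add: e add.commute)
    then show ?thesis using gen[of r p] False p r by simp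
  qed
qed

lemma sum_box:
  fixes f :: "nat \<Rightarrow> nat \<Rightarrow> complex"
  assumes "finite U" "finite V" "S \<subseteq> U" "R \<subseteq> V"
  shows "(\<Sum>p\<in>U. \<Sum>r\<in>V. (if p \<in> S \<and> r \<in> R then f p r else 0)) = (\<Sum>p\<in>S. \<Sum>r\<in>R. f p r)"
proof -
  have "(\<Sum>p\<in>U. \<Sum>r\<in>V. (if p \<in> S \<and> r \<in> R then f p r else 0))
      = (\<Sum>p\<in>U. if p \<in> S then (\<Sum>r\<in>R. f p r) else 0)"
  proof (rule sum.cong[OF refl])
    fix p
    have "(\<Sum>r\<in>V. (if r \<in> R then f p r else 0)) = (\<Sum>r\<in>R. f p r)"
      using sum.inter_restrict[OF assms(2), of "f p" R] assms(4) by (simp add: Int_absorb1)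
    then show "(\<Sum>r\<in>V. (if p \<in> S \<and> r \<in> R then f p r else 0)) = (if p \<in> S then (\<Sum>r\<in>R. f p r) else 0)"
      by auto
  qed
  also have "\<dots> = (\<Sum>p\<in>S. \<Sum>r\<in>R. f p r)"
    using sum.inter_restrict[OF assms(1), of "\<lambda>p. \<Sum>r\<in>R. f p r" S] assms(3) by (simp add: Int_absorb1)
  finally show ?thesis .
qed

lemma Pi_reindex:
  assumes l: "l \<le> N"
  shows "Pi_bracket N l B dF dG =
     (\<Sum>p<N. \<Sum>r<N. eps l p r * T (dF p) (B (int p + int r + 1 - int l)) (dG r))"
proof -
  define t where "t p r = T (dF p) (B (int p + int r + 1 - int l)) (dG r)" for p r
  have first: "(\<Sum>i=1..l. \<Sum>j=1..l. trace (dF (i-1) ** (- lbr (B (int i + int j - int l - 1)) (dG (j-1)))))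
     = (\<Sum>p\<in>{..<l}. \<Sum>r\<in>{..<l}. - t p r)"
  proof -
    have "(\<Sum>i=1..l. \<Sum>j=1..l. trace (dF (i-1) ** (- lbr (B (int i + int j - int l - 1)) (dG (j-1)))))
       = (\<Sum>p\<in>{..<l}. \<Sum>j=1..l. trace (dF p ** (- lbr (B (int (p+1) + int j - int l - 1)) (dG (j-1)))))"
      by (rule sum.reindex_bij_witness[of _ "\<lambda>p. p + 1" "\<lambda>i. i - 1"]) auto
    also have "\<dots> = (\<Sum>p\<in>{..<l}. \<Sum>r\<in>{..<l}. trace (dF p ** (- lbr (B (int (p+1) + int (r+1) - int l - 1)) (dG r))))"
      by (rule sum.cong[OF refl], rule sum.reindex_bij_witness[of _ "\<lambda>p. p + 1" "\<lambda>i. i - 1"]) auto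
    also have "\<dots> = (\<Sum>p\<in>{..<l}. \<Sum>r\<in>{..<l}. - t p r)"
      by (intro sum.cong refl) (simp add: t_def T_def trace_neg_right algebra_simps)
    finally show ?thesis .
  qed
  have second: "(\<Sum>i=1..N-l. \<Sum>j=1..N-l. trace (dF (l+i-1) ** lbr (B (int i + int j + int l - 1)) (dG (l+j-1))))
     = (\<Sum>p\<in>{l..<N}. \<Sum>r\<in>{l..<N}. t p r)"
  proof -
    have "(\<Sum>i=1..N-l. \<Sum>j=1..N-l. trace (dF (l+i-1) ** lbr (B (int i + int j + int l - 1)) (dG (l+j-1))))
       = (\<Sum>p\<in>{l..<N}. \<Sum>j=1..N-l. trace (dF p ** lbr (B (int (p+1-l) + int j + int l - 1)) (dG (l+j-1))))"
      by (rule sum.reindex_bij_witness[of _ "\<lambda>p. p + 1 - l" "\<lambda>i. l + i - 1"]) (use l in auto)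
    also have "\<dots> = (\<Sum>p\<in>{l..<N}. \<Sum>r\<in>{l..<N}. trace (dF p ** lbr (B (int (p+1-l) + int (r+1-l) + int l - 1)) (dG r)))"
      by (rule sum.cong[OF refl], rule sum.reindex_bij_witness[of _ "\<lambda>p. p + 1 - l" "\<lambda>i. l + i - 1"]) (use l in auto)
    also have "\<dots> = (\<Sum>p\<in>{l..<N}. \<Sum>r\<in>{l..<N}. t p r)"
      by (intro sum.cong refl) (auto simp: t_def T_def of_nat_diff algebra_simps)
    finally show ?thesis .
  qed
  have "(\<Sum>p<N. \<Sum>r<N. eps l p r * t p r)
     = (\<Sum>p<N. \<Sum>r<N. (if p \<in> {..<l} \<and> r \<in> {..<l} then - t p r else 0)
                     + (if p \<in> {l..<N} \<and> r \<in> {l..<N} then t p r else 0))"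
    by (intro sum.cong refl) (auto simp: eps_def)
  also have "\<dots> = (\<Sum>p<N. \<Sum>r<N. (if p \<in> {..<l} \<and> r \<in> {..<l} then - t p r else 0))
                + (\<Sum>p<N. \<Sum>r<N. (if p \<in> {l..<N} \<and> r \<in> {l..<N} then t p r else 0))"
    by (simp add: sum.distrib)
  also have "\<dots> = (\<Sum>p\<in>{..<l}. \<Sum>r\<in>{..<l}. - t p r) + (\<Sum>p\<in>{l..<N}. \<Sum>r\<in>{l..<N}. t p r)"
  proof -
    have b1: "(\<Sum>p<N. \<Sum>r<N. (if p \<in> {..<l} \<and> r \<in> {..<l} then - t p r else 0)) = (\<Sum>p\<in>{..<l}. \<Sum>r\<in>{..<l}. - t p r)"
      by (rule sum_box) (use l in auto)
    have b2: "(\<Sum>p<N. \<Sum>r<N. (if p \<in> {l..<N} \<and> r \<in> {l..<N} then t p r else 0)) = (\<Sum>p\<in>{l..<N}. \<Sum>r\<in>{l..<N}. t p r)"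
      by (rule sum_box) auto
    show ?thesis by (simp only: b1 b2)
  qed
  finally show ?thesis unfolding Pi_bracket_def first second t_def by simp
qed

lemma msc_add_right: "msc c (X + Y) = msc c X + msc c (Y::'r::finite cmat)"
  by (simp add: msc_def vec_eq_iff algebra_simps)
lemma msc_zero_right: "msc c (0::'r::finite cmat) = 0"
  by (simp add: msc_def vec_eq_iff)
lemma msc_zero_left: "msc 0 (X::'r::finite cmat) = 0"
  by (simp add: msc_def vec_eq_iff)
lemma msc_msc: "msc c (msc d X) = msc d (msc c (X::'r::finite cmat))"
  by (simp add: msc_def vec_eq_iff algebra_simps)

lemma csub_sum:
  assumes "csubspace g" "finite S" "\<forall>j\<in>S. f j \<in> g" shows "sum f S \<in> g"
  using assms(2,3) by (induction S rule: finite_induct) (use assms(1) in \<open>auto simp: csubspace_def\<close>)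

lemma inner:
  fixes TA :: "nat \<Rightarrow> complex"
  assumes N: "N \<ge> 1" and p: "p < N" and r: "r < N"
  shows "(\<Sum>l=0..N. (- qq N a (int l)) * (eps l p r *
            ((\<Sum>j=1..N. mm N a j (int p + int r + 1 - int l) * TA j)
              + qq N a (int p + int r + 1 - int l) * TS)))
       = (\<Sum>j=1..N. mm N a j (int p) * mm N a j (int r) * TA j)"
proof -
  let ?n = "int p + int r + 1"
  have "(\<Sum>l=0..N. (- qq N a (int l)) * (eps l p r *
            ((\<Sum>j=1..N. mm N a j (?n - int l) * TA j) + qq N a (?n - int l) * TS)))
     = (\<Sum>l=0..N. (\<Sum>j=1..N. (- qq N a (int l)) * eps l p r * mm N a j (?n - int l) * TA j)
          + (- qq N a (int l)) * eps l p r * qq N a (?n - int l) * TS)"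
    by (intro sum.cong refl) (simp add: algebra_simps sum_distrib_left)
  also have "\<dots> = (\<Sum>j=1..N. \<Sum>l=0..N. (- qq N a (int l)) * eps l p r * mm N a j (?n - int l) * TA j)
          + (\<Sum>l=0..N. (- qq N a (int l)) * eps l p r * qq N a (?n - int l)) * TS"
  proof -
    have sw: "(\<Sum>l=0..N. \<Sum>j=1..N. (- qq N a (int l)) * eps l p r * mm N a j (?n - int l) * TA j)
       = (\<Sum>j=1..N. \<Sum>l=0..N. (- qq N a (int l)) * eps l p r * mm N a j (?n - int l) * TA j)"
      by (rule sum.swap)
    show ?thesis by (simp only: sum.distrib sum_distrib_right sw)
  qed
  also have "(\<Sum>l=0..N. (- qq N a (int l)) * eps l p r * qq N a (?n - int l)) = 0"
    by (rule scalar_S[OF N p r])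
  also have "(\<Sum>j=1..N. \<Sum>l=0..N. (- qq N a (int l)) * eps l p r * mm N a j (?n - int l) * TA j)
      = (\<Sum>j=1..N. mm N a j (int p) * mm N a j (int r) * TA j)"
  proof (rule sum.cong[OF refl])
    fix j assume j: "j \<in> {1..N}"
    have "(\<Sum>l=0..N. (- qq N a (int l)) * eps l p r * mm N a j (?n - int l) * TA j)
        = (\<Sum>l=0..N. (- qq N a (int l)) * eps l p r * mm N a j (?n - int l)) * TA j"
      by (simp add: sum_distrib_right)
    also have "\<dots> = mm N a j (int p) * mm N a j (int r) * TA j"
      using scalar_A[OF N j p r] by simp
    finally show "(\<Sum>l=0..N. (- qq N a (int l)) * eps l p r * mm N a j (?n - int l) * TA j)
        = mm N a j (int p) * mm N a j (int r) * TA j" .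
  qed
  finally show ?thesis by simp
qed

lemma grad_rel:
  fixes F :: "(nat \<Rightarrow> 'r::finite cmat) \<Rightarrow> complex"
  assumes N: "N \<ge> 1" and cs: "csubspace g"
    and hA: "has_grad g 1 N (\<lambda>X. F (\<lambda>l. Bcoord N a \<sigma> X (int l))) A dA"
    and hB: "has_grad g 0 N F (\<lambda>l. Bcoord N a \<sigma> A (int l)) dB"
    and i: "i \<in> {1..N}" and y: "y \<in> g"
  shows "trace (dA i ** y) = trace ((\<Sum>p<N. msc (mm N a i (int p)) (dB p)) ** y)"
proof -
  define V where "V j = (if j = i then y else (0::'r cmat))" for j
  define V' where "V' l = msc (mm N a i (int l)) y" for l
  have c0: "0 \<in> g" and cm: "\<And>c x. x \<in> g \<Longrightarrow> msc c x \<in> g" using cs by (auto simp: csubspace_def)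
  have "(\<forall>j\<in>{1..<1+N}. V j \<in> g) \<and> (\<forall>j. j \<notin> {1..<1+N} \<longrightarrow> V j = 0)"
    using i y c0 by (auto simp: V_def)
  then have d1: "((\<lambda>t. F (\<lambda>l. Bcoord N a \<sigma> (\<lambda>j. A j + msc t (V j)) (int l))) has_field_derivative
       (\<Sum>j\<in>{1..<1+N}. trace (dA j ** V j))) (at 0)"
    using hA unfolding has_grad_def by blast
  have "(\<forall>l\<in>{0..<0+N}. V' l \<in> g) \<and> (\<forall>l. l \<notin> {0..<0+N} \<longrightarrow> V' l = 0)"
    using y cm by (auto simp: V'_def mm_def msc_zero_left)
  then have d2: "((\<lambda>t. F (\<lambda>l. Bcoord N a \<sigma> A (int l) + msc t (V' l))) has_field_derivative
       (\<Sum>l\<in>{0..<0+N}. trace (dB l ** V' l))) (at 0)"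
    using hB unfolding has_grad_def by blast
  have pt: "Bcoord N a \<sigma> (\<lambda>j. A j + msc t (V j)) k = Bcoord N a \<sigma> A k + msc t (msc (mm N a i k) y)"
    for t k
  proof -
    have s: "(\<Sum>j=1..N. msc (mm N a j k) (msc t (V j))) = msc (mm N a i k) (msc t y)"
    proof -
      have "(\<Sum>j=1..N. msc (mm N a j k) (msc t (V j)))
          = (\<Sum>j=1..N. if j = i then msc (mm N a i k) (msc t y) else 0)"
        by (intro sum.cong refl) (auto simp: V_def msc_zero_right)
      also have "\<dots> = msc (mm N a i k) (msc t y)" using i by simp
      finally show ?thesis .
    qed
    show ?thesis
      unfolding Bcoord_repr[OF N] msc_add_right sum.distrib s
      by (simp add: msc_msc algebra_simps)
  qed
  have feq: "(\<lambda>t. F (\<lambda>l. Bcoord N a \<sigma> (\<lambda>j. A j + msc t (V j)) (int l)))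
        = (\<lambda>t. F (\<lambda>l. Bcoord N a \<sigma> A (int l) + msc t (V' l)))"
    by (simp add: pt V'_def)
  have eq: "(\<Sum>j\<in>{1..<1+N}. trace (dA j ** V j)) = (\<Sum>l\<in>{0..<0+N}. trace (dB l ** V' l))"
    using DERIV_unique[OF d1 d2[folded feq]] .
  have l: "(\<Sum>j\<in>{1..<1+N}. trace (dA j ** V j)) = trace (dA i ** y)"
  proof -
    have "(\<Sum>j\<in>{1..<1+N}. trace (dA j ** V j)) = (\<Sum>j\<in>{1..<1+N}. if j = i then trace (dA i ** y) else 0)"
      by (intro sum.cong refl) (auto simp: V_def trace_zero_right trace_zero)
    also have "\<dots> = trace (dA i ** y)" using i by simp
    finally show ?thesis .
  qed
  have r: "(\<Sum>l\<in>{0..<0+N}. trace (dB l ** V' l)) = trace ((\<Sum>p<N. msc (mm N a i (int p)) (dB p)) ** y)"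
    by (simp add: trace_sum_left trace_msc_left trace_msc_right V'_def atLeast0LessThan)
  show ?thesis using eq l r by simp
qed

theorem lemma1:
  fixes g :: "'r::finite cmat set" and N :: nat and a :: "nat \<Rightarrow> complex" and \<sigma> :: "'r cmat"
    and A :: "nat \<Rightarrow> 'r cmat"
    and Ft Gt :: "(nat \<Rightarrow> 'r cmat) \<Rightarrow> complex"
    and dFA dGA dFB dGB :: "nat \<Rightarrow> 'r cmat"
  assumes "semisimple g"
    and "N \<ge> 1"
    and "inj_on a {1..N}"
    and "\<sigma> \<in> g"
    and "\<forall>i\<in>{1..N}. A i \<in> g"
    and "has_grad g 1 N (\<lambda>X. Ft (\<lambda>l. Bcoord N a \<sigma> X (int l))) A dFA"
    and "has_grad g 1 N (\<lambda>X. Gt (\<lambda>l. Bcoord N a \<sigma> X (int l))) A dGA"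
    and "has_grad g 0 N Ft (\<lambda>l. Bcoord N a \<sigma> A (int l)) dFB"
    and "has_grad g 0 N Gt (\<lambda>l. Bcoord N a \<sigma> A (int l)) dGB"
  shows "P_bracket N A dFA dGA =
    (\<Sum>l=0..N. ((-1)^(N-l+1) * esym (N-l) {1..N} a) * Pi_bracket N l (Bcoord N a \<sigma> A) dFB dGB)"
proof -
  note N = assms(2)
  have cs: "csubspace g" and lb: "\<And>x y. x \<in> g \<Longrightarrow> y \<in> g \<Longrightarrow> lbr x y \<in> g"
    using assms(1) by (auto simp: semisimple_def lie_subalgebra_def)
  have cm: "\<And>c x. x \<in> g \<Longrightarrow> msc c x \<in> g" using cs by (auto simp: csubspace_def)
  define WF where "WF i = (\<Sum>p<N. msc (mm N a i (int p)) (dFB p))" for i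
  define WG where "WG i = (\<Sum>p<N. msc (mm N a i (int p)) (dGB p))" for i
  have dFBg: "\<And>p. p < N \<Longrightarrow> dFB p \<in> g" using assms(8) by (auto simp: has_grad_def)
  have dGBg: "\<And>p. p < N \<Longrightarrow> dGB p \<in> g" using assms(9) by (auto simp: has_grad_def)
  have dGAg: "\<And>i. i \<in> {1..N} \<Longrightarrow> dGA i \<in> g" using assms(7) by (auto simp: has_grad_def)
  have WFg: "WF i \<in> g" for i unfolding WF_def by (rule csub_sum[OF cs]) (auto intro: cm dFBg)
  have WGg: "WG i \<in> g" for i unfolding WG_def by (rule csub_sum[OF cs]) (auto intro: cm dGBg)
  have hF: "\<And>i y. i \<in> {1..N} \<Longrightarrow> y \<in> g \<Longrightarrow> trace (dFA i ** y) = trace (WF i ** y)"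
    unfolding WF_def by (rule grad_rel[OF N cs assms(6) assms(8)])
  have hG: "\<And>i y. i \<in> {1..N} \<Longrightarrow> y \<in> g \<Longrightarrow> trace (dGA i ** y) = trace (WG i ** y)"
    unfolding WG_def by (rule grad_rel[OF N cs assms(7) assms(9)])
  have step3: "T (dFA i) (A i) (dGA i) = T (WF i) (A i) (WG i)" if i: "i \<in> {1..N}" for i
  proof -
    have Ai: "A i \<in> g" using assms(5) i by auto
    have "T (dFA i) (A i) (dGA i) = trace (WF i ** lbr (A i) (dGA i))"
      unfolding T_def by (rule hF[OF i lb[OF Ai dGAg[OF i]]])
    also have "\<dots> = trace (dGA i ** lbr (WF i) (A i))"
      by (subst trace_lbr_move, subst trace_mul_sym, rule refl)
    also have "\<dots> = trace (WG i ** lbr (WF i) (A i))"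
      by (rule hG[OF i lb[OF WFg Ai]])
    also have "\<dots> = T (WF i) (A i) (WG i)"
      unfolding T_def by (subst trace_lbr_move, subst trace_mul_sym, rule refl)
    finally show ?thesis .
  qed
  define TA where "TA p r j = T (dFB p) (A j) (dGB r)" for p r j
  define TS where "TS p r = T (dFB p) \<sigma> (dGB r)" for p r
  have lhs: "P_bracket N A dFA dGA = (\<Sum>p<N. \<Sum>r<N. \<Sum>j=1..N. mm N a j (int p) * mm N a j (int r) * TA p r j)"
  proof -
    have "P_bracket N A dFA dGA = (\<Sum>j=1..N. T (WF j) (A j) (WG j))"
      unfolding P_bracket_def using step3 by (simp add: T_def)
    also have "\<dots> = (\<Sum>j=1..N. \<Sum>p<N. \<Sum>r<N. mm N a j (int p) * mm N a j (int r) * TA p r j)"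
    proof (rule sum.cong[OF refl])
      fix j
      show "T (WF j) (A j) (WG j) = (\<Sum>p<N. \<Sum>r<N. mm N a j (int p) * mm N a j (int r) * TA p r j)"
        unfolding WF_def WG_def TA_def
        apply (simp add: T_sum1 T_sum3 T_msc1 T_msc3 sum_distrib_left mult.assoc)
        apply (subst sum.swap)
        apply (simp add: mult.left_commute)
        done
    qed
    also have "\<dots> = (\<Sum>p<N. \<Sum>j=1..N. \<Sum>r<N. mm N a j (int p) * mm N a j (int r) * TA p r j)"
      by (rule sum.swap)
    also have "\<dots> = (\<Sum>p<N. \<Sum>r<N. \<Sum>j=1..N. mm N a j (int p) * mm N a j (int r) * TA p r j)"
      by (rule sum.cong[OF refl], rule sum.swap)
    finally show ?thesis .
  qed
  have TB: "T (dFB p) (Bcoord N a \<sigma> A k) (dGB r) = (\<Sum>j=1..N. mm N a j k * TA p r j) + qq N a k * TS p r"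
    for p r k
    unfolding Bcoord_repr[OF N] by (simp add: T_add2 T_sum2 T_msc2 TA_def TS_def)
  have coef: "(-1)^(N-l+1) * esym (N-l) {1..N} a = - qq N a (int l)" if "l \<in> {0..N}" for l
    using that by (simp add: qq_def)
  have "(\<Sum>l=0..N. ((-1)^(N-l+1) * esym (N-l) {1..N} a) * Pi_bracket N l (Bcoord N a \<sigma> A) dFB dGB)
    = (\<Sum>l=0..N. \<Sum>p<N. \<Sum>r<N. (- qq N a (int l)) * (eps l p r *
            ((\<Sum>j=1..N. mm N a j (int p + int r + 1 - int l) * TA p r j)
              + qq N a (int p + int r + 1 - int l) * TS p r)))"
  proof (rule sum.cong[OF refl])
    fix l assume l: "l \<in> {0..N}"
    show "((-1)^(N-l+1) * esym (N-l) {1..N} a) * Pi_bracket N l (Bcoord N a \<sigma> A) dFB dGB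
      = (\<Sum>p<N. \<Sum>r<N. (- qq N a (int l)) * (eps l p r *
            ((\<Sum>j=1..N. mm N a j (int p + int r + 1 - int l) * TA p r j)
              + qq N a (int p + int r + 1 - int l) * TS p r)))"
      unfolding coef[OF l] Pi_reindex[of l N, OF conjunct2[OF l[unfolded atLeastAtMost_iff]]] TB
      by (simp add: sum_distrib_left)
  qed
  also have "\<dots> = (\<Sum>p<N. \<Sum>l=0..N. \<Sum>r<N. (- qq N a (int l)) * (eps l p r *
            ((\<Sum>j=1..N. mm N a j (int p + int r + 1 - int l) * TA p r j)
              + qq N a (int p + int r + 1 - int l) * TS p r)))"
    by (rule sum.swap)
  also have "\<dots> = (\<Sum>p<N. \<Sum>r<N. \<Sum>l=0..N. (- qq N a (int l)) * (eps l p r *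
            ((\<Sum>j=1..N. mm N a j (int p + int r + 1 - int l) * TA p r j)
              + qq N a (int p + int r + 1 - int l) * TS p r)))"
    by (rule sum.cong[OF refl], rule sum.swap)
  also have "\<dots> = (\<Sum>p<N. \<Sum>r<N. \<Sum>j=1..N. mm N a j (int p) * mm N a j (int r) * TA p r j)"
  proof (rule sum.cong[OF refl], rule sum.cong[OF refl])
    fix p r assume "p \<in> {..<N}" "r \<in> {..<N}"
    then show "(\<Sum>l=0..N. (- qq N a (int l)) * (eps l p r *
            ((\<Sum>j=1..N. mm N a j (int p + int r + 1 - int l) * TA p r j)
              + qq N a (int p + int r + 1 - int l) * TS p r)))
       = (\<Sum>j=1..N. mm N a j (int p) * mm N a j (int r) * TA p r j)"
      using inner[OF N, of p r a "TA p r" "TS p r"] by simp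
  qed
  finally show ?thesis using lhs by simp
qed

end
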